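(* Let $X\in\mathcal{C}^\circ(\mathbb{R}^2)$ admit a GCGR with sufficient scaling factor $\eta(X)$, let $x_G\in\mathrm{int}X$ and $r>0$. Then for each integer $m\ge\eta(X)$, the family $\mathcal{P}_{\mathrm{grid}}(X,x_G,m)=\{P_{\mathrm{grid}}(X,x_I,x_G,m): x_I\in\mathrm{int}X\}$ contains only finitely many pairwise non-isomorphic planning problems.
   Context: $\mathcal{C}^\circ(\mathbb{R}^2)$ is the collection of compact, connected subsets of $\mathbb{R}^2$ with non-empty interior. For $x\in X$, $m\in\mathbb{N}$: $X_{\mathrm{grid}}(x,m):=\mathrm{int}X\cap(x+2^{-m}(\mathbb{Z}\times\mathbb{Z}))$; such a set is connected if any two of its points are joined by a chain of its points with consecutive points at distance $2^{-m}$. $X$ admits a GCGR with sufficient scaling factor $\eta(X)\in\mathbb{N}$ if for all $m\ge\eta(X)$ and all $x_I\in X$, $X_{\mathrm{grid}}(x_I,m)$ is connected. With $v\in\{(-1,0),(1,0),(0,1),(0,-1)\}$, let $U_m=\{2^{-m}v\}$. For $x_I\in\mathrm{int}X$ let $x_G(x_I,m):=B_r(x_G)\cap(x_I+2^{-m}(\mathbb{Z}\times\mathbb{Z}))$ and $P_{\mathrm{grid}}(X,x_I,x_G,m):=(X_{\mathrm{grid}}(x_I,m),U_m,f_m,x_I,x_G(x_I,m))$, where $f_m(x,u)=x+u$ if $x+u\in X_{\mathrm{grid}}(x_I,m)$ and $f_m(x,u)=x$ otherwise. Planning problems $(X,U,f,x_I,X_G)$ and $(X',U',f',x_I',X_G')$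 are isomorphic if there are bijections $\varphi:X\to X'$, $\xi:U\to U'$ with $\varphi(x_I)=x_I'$, $\varphi(X_G)=X_G'$ and $f'(\varphi(x),\xi(u))=\varphi(f(x,u))$ for all $x\in X$, $u\in U$. *)

theory Defs
  imports "HOL-Analysis.Analysis"
begin

type_synonym pt = "real \<times> real"

definition C_int :: "pt set set" where
  "C_int = {X. compact X \<and> connected X \<and> interior X \<noteq> {}}"

definition lattice :: "pt \<Rightarrow> nat \<Rightarrow> pt set" where
  "lattice x m = {x + ((2::real) powr (- real m)) *\<^sub>R (of_int i, of_int j) | i j :: int. True}"

definition X_grid :: "pt set \<Rightarrow> pt \<Rightarrow> nat \<Rightarrow> pt set" where
  "X_grid X x m = interior X \<inter> lattice x m"

definition grid_adj :: "pt set \<Rightarrow> nat \<Rightarrow> (pt \<times> pt) set" where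
  "grid_adj S m = {(p, q). p \<in> S \<and> q \<in> S \<and> dist p q = (2::real) powr (- real m)}"

definition grid_connected :: "pt set \<Rightarrow> nat \<Rightarrow> bool" where
  "grid_connected S m \<longleftrightarrow> (\<forall>p\<in>S. \<forall>q\<in>S. (p, q) \<in> (grid_adj S m)\<^sup>*)"

definition admits_GCGR :: "pt set \<Rightarrow> nat \<Rightarrow> bool" where
  "admits_GCGR X eta \<longleftrightarrow>
     (\<forall>m\<ge>eta. \<forall>xI\<in>X. grid_connected (X_grid X xI m) m)"

definition U_grid :: "nat \<Rightarrow> pt set" where
  "U_grid m = (\<lambda>v. ((2::real) powr (- real m)) *\<^sub>R v) ` {(-1, 0), (1, 0), (0, 1), (0, -1)}"

definition f_grid :: "pt set \<Rightarrow> pt \<Rightarrow> nat \<Rightarrow> pt \<Rightarrow> pt \<Rightarrow> pt" where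
  "f_grid X xI m x u = (if x + u \<in> X_grid X xI m then x + u else x)"

text \<open>Planning problems (states, actions, transition, initial state, goal set).\<close>
type_synonym ('s, 'u) planning_problem = "'s set \<times> 'u set \<times> ('s \<Rightarrow> 'u \<Rightarrow> 's) \<times> 's \<times> 's set"

definition goal_grid :: "pt \<Rightarrow> real \<Rightarrow> pt \<Rightarrow> nat \<Rightarrow> pt set" where
  "goal_grid xG r xI m = ball xG r \<inter> lattice xI m"

definition P_grid :: "pt set \<Rightarrow> pt \<Rightarrow> pt \<Rightarrow> real \<Rightarrow> nat \<Rightarrow> (pt, pt) planning_problem" where
  "P_grid X xI xG r m = (X_grid X xI m, U_grid m, f_grid X xI m, xI, goal_grid xG r xI m)"

definition pp_isomorphic :: "('s, 'u) planning_problem \<Rightarrow> ('t, 'v) planning_problem \<Rightarrow> bool" where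
  "pp_isomorphic P P' \<longleftrightarrow>
     (case P of (X, U, f, xI, XG) \<Rightarrow> case P' of (X', U', f', xI', XG') \<Rightarrow>
       (\<exists>\<phi> \<xi>. bij_betw \<phi> X X' \<and> bij_betw \<xi> U U' \<and> \<phi> xI = xI' \<and> \<phi> ` XG = XG' \<and>
              (\<forall>x\<in>X. \<forall>u\<in>U. f' (\<phi> x) (\<xi> u) = \<phi> (f x u))))"

end

theory Submission
  imports Defs
begin

definition gmap :: "pt \<Rightarrow> nat \<Rightarrow> int \<times> int \<Rightarrow> pt" where
  "gmap x m = (\<lambda>(i,j). x + ((2::real) powr (- real m)) *\<^sub>R (of_int i, of_int j))"

definition idx :: "pt set \<Rightarrow> pt \<Rightarrow> nat \<Rightarrow> (int \<times> int) set" where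
  "idx A x m = {k. gmap x m k \<in> A}"

lemma lattice_gmap: "lattice x m = range (gmap x m)"
  unfolding lattice_def gmap_def
proof (auto simp del: scaleR_Pair)
  fix i j :: int
  show "x + 2 powr - real m *\<^sub>R (real_of_int i, real_of_int j) \<in> range (\<lambda>(i, j). x + 2 powr - real m *\<^sub>R (real_of_int i, real_of_int j))"
    by (rule image_eqI[of _ _ "(i,j)"]) auto
qed

lemma inter_lattice: "A \<inter> lattice x m = gmap x m ` idx A x m"
  unfolding lattice_gmap idx_def by auto

lemma gmap_shift: "(\<lambda>p. p - x + y) \<circ> gmap x m = gmap y m"
  unfolding gmap_def by (auto simp: fun_eq_iff)

lemma int_nat_ge: "c \<le> int (nat c)" by simp

lemma idx_bounded:
  assumes "\<forall>a\<in>A. norm a \<le> R2" "norm x \<le> R"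
  shows "idx A x m \<subseteq> {-int (nat \<lceil>(R+R2) / 2 powr (- real m)\<rceil>)..int (nat \<lceil>(R+R2) / 2 powr (- real m)\<rceil>)} \<times>
                      {-int (nat \<lceil>(R+R2) / 2 powr (- real m)\<rceil>)..int (nat \<lceil>(R+R2) / 2 powr (- real m)\<rceil>)}"
proof
  fix k assume k: "k \<in> idx A x m"
  obtain i j where kij: "k = (i,j)" by fastforce
  define h where "h = (2::real) powr (- real m)"
  have hpos: "h > 0" unfolding h_def by simp
  define z where "z = h *\<^sub>R ((of_int i, of_int j) :: pt)"
  have "gmap x m k \<in> A" using k unfolding idx_def by auto
  hence "norm (x + z) \<le> R2" using assms unfolding gmap_def z_def h_def kij by auto
  hence nz: "norm z \<le> R + R2" using assms(2) norm_triangle_ineq4[of "x+z" x] by simp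
  have "norm (fst z) \<le> norm z" "norm (snd z) \<le> norm z" unfolding norm_prod_def by (simp_all del: real_norm_def add: real_le_rsqrt)
  hence "h * \<bar>of_int i\<bar> \<le> R + R2" "h * \<bar>of_int j\<bar> \<le> R + R2"
    using nz hpos by (auto simp: z_def abs_mult)
  hence "\<bar>of_int i\<bar> \<le> (R+R2)/h" "\<bar>of_int j\<bar> \<le> (R+R2)/h"
    using hpos by (auto simp: field_simps)
  hence "\<bar>i\<bar> \<le> \<lceil>(R+R2)/h\<rceil>" "\<bar>j\<bar> \<le> \<lceil>(R+R2)/h\<rceil>"
    by (metis ceiling_mono ceiling_of_int of_int_abs)+
  thus "k \<in> {-int (nat \<lceil>(R+R2) / 2 powr (- real m)\<rceil>)..int (nat \<lceil>(R+R2) / 2 powr (- real m)\<rceil>)} \<times>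
                      {-int (nat \<lceil>(R+R2) / 2 powr (- real m)\<rceil>)..int (nat \<lceil>(R+R2) / 2 powr (- real m)\<rceil>)}"
    unfolding kij h_def using int_nat_ge[of "\<lceil>(R+R2) / 2 powr (- real m)\<rceil>"] by (simp add: abs_le_iff)
qed

theorem proposition2:
  fixes X :: "pt set" and eta :: nat and xG :: pt and r :: real and m :: nat
  assumes "X \<in> C_int"
    and "admits_GCGR X eta"
    and "xG \<in> interior X"
    and "r > 0"
    and "m \<ge> eta"
  shows "\<exists>F. finite F \<and> F \<subseteq> interior X \<and>
           (\<forall>xI\<in>interior X. \<exists>y\<in>F. pp_isomorphic (P_grid X xI xG r m) (P_grid X y xG r m))"
proof -
  have "bounded X" using assms(1) unfolding C_int_def by (auto simp: compact_imp_bounded)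
  then obtain R where R: "\<forall>a\<in>X. norm a \<le> R" by (auto simp: bounded_iff)
  define R2 where "R2 = max R (norm xG + r)"
  have bI: "\<forall>a\<in>interior X. norm a \<le> R2" using R interior_subset unfolding R2_def by fastforce
  have bB: "\<forall>a\<in>ball xG r. norm a \<le> R2" unfolding R2_def
    by (auto simp: dist_norm) (smt (verit) norm_minus_commute norm_triangle_ineq2)
  define N where "N = int (nat \<lceil>(R+R2) / 2 powr (- real m)\<rceil>)"
  define B where "B = {-N..N} \<times> {-N..N}"
  have finB: "finite B" unfolding B_def by auto
  define key where "key x = (idx (interior X) x m, idx (ball xG r) x m)" for x
  have keyB: "key x \<in> Pow B \<times> Pow B" if "x \<in> interior X" for x
  proof -
    have "norm x \<le> R" using that R interior_subset by auto
    thus ?thesis unfolding key_def B_def N_def using idx_bounded[OF bI] idx_bounded[OF bB] by auto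
  qed
  define rep where "rep k = (SOME y. y \<in> interior X \<and> key y = k)" for k
  define F where "F = rep ` (key ` interior X)"
  have "finite F" unfolding F_def
    by (rule finite_imageI, rule finite_subset[of _ "Pow B \<times> Pow B"]) (use keyB finB in fastforce)+
  moreover have repP: "rep (key x) \<in> interior X \<and> key (rep (key x)) = key x" if "x \<in> interior X" for x
    unfolding rep_def by (rule someI[of _ x]) (use that in auto)
  moreover have "F \<subseteq> interior X" unfolding F_def using repP by auto
  moreover have iso: "pp_isomorphic (P_grid X x xG r m) (P_grid X y xG r m)" if "key x = key y" for x y
  proof -
    define \<phi> where "\<phi> = (\<lambda>p::pt. p - x + y)"
    have inj: "inj \<phi>" unfolding \<phi>_def by (auto intro: injI)
    have S: "\<phi> ` X_grid X x m = X_grid X y m"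
      unfolding X_grid_def inter_lattice image_comp \<phi>_def gmap_shift
      using that unfolding key_def by auto
    have G: "\<phi> ` goal_grid xG r x m = goal_grid xG r y m"
      unfolding goal_grid_def inter_lattice image_comp \<phi>_def gmap_shift
      using that unfolding key_def by auto
    have bij: "bij_betw \<phi> (X_grid X x m) (X_grid X y m)"
      using S inj by (auto simp: bij_betw_def intro: inj_on_subset[OF inj])
    have f: "f_grid X y m (\<phi> p) u = \<phi> (f_grid X x m p u)" for p u
    proof -
      have e: "\<phi> p + u = \<phi> (p + u)" unfolding \<phi>_def by simp
      have "(\<phi> (p+u) \<in> X_grid X y m) = (p + u \<in> X_grid X x m)"
        unfolding S[symmetric] using inj by (auto simp: inj_image_mem_iff)
      thus ?thesis unfolding f_grid_def e by auto
    qed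
    show ?thesis unfolding pp_isomorphic_def P_grid_def
      apply simp
      apply (rule exI[of _ \<phi>], rule conjI[OF bij])
      apply (rule exI[of _ id])
      using G f by (auto simp: \<phi>_def)
  qed
  ultimately show ?thesis
  proof (intro exI[of _ F] conjI ballI)
    fix xI assume xI: "xI \<in> interior X"
    show "\<exists>y\<in>F. pp_isomorphic (P_grid X xI xG r m) (P_grid X y xG r m)"
    proof (rule bexI[of _ "rep (key xI)"])
      show "rep (key xI) \<in> F" unfolding F_def using xI by blast
      show "pp_isomorphic (P_grid X xI xG r m) (P_grid X (rep (key xI)) xG r m)"
        using iso repP[OF xI] by metis
    qed
  qed auto
qed

end
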